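(* Let $r$ be a positive integer, let $A$ be a cubic graph of order $4r$, let $a$ be a vertex of $A$, and let $A^-=A-a$. If $A^-$ is an induced subgraph of a cubic graph $H$, then any $2$-conversion set of $H$ contains at least $r$ vertices of $A^-$.
   Context: For a graph $H=(V,E)$ and $S_0\subseteq V$, the irreversible $2$-threshold conversion process sets, for $t=1,2,\dots$, $S_t=S_{t-1}\cup\{v: v \text{ has at least } 2 \text{ neighbours in } S_{t-1}\}$; $S_0$ is a $2$-conversion set of $H$ if $S_t=V$ for some $t\ge 0$. *)

theory Defs
  imports Main
begin

definition simple_graph :: "'a set \<Rightarrow> ('a \<Rightarrow> 'a \<Rightarrow> bool) \<Rightarrow> bool" where
  "simple_graph V E \<longleftrightarrow> finite V \<and> (\<forall>u v. E u v \<longrightarrow> u \<in> V \<and> v \<in> V)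
     \<and> (\<forall>u v. E u v \<longrightarrow> E v u) \<and> (\<forall>v. \<not> E v v)"

definition cubic :: "'a set \<Rightarrow> ('a \<Rightarrow> 'a \<Rightarrow> bool) \<Rightarrow> bool" where
  "cubic V E \<longleftrightarrow> simple_graph V E \<and> (\<forall>v\<in>V. card {u \<in> V. E v u} = 3)"

definition conv_step :: "'a set \<Rightarrow> ('a \<Rightarrow> 'a \<Rightarrow> bool) \<Rightarrow> 'a set \<Rightarrow> 'a set" where
  "conv_step V E S = S \<union> {v \<in> V. 2 \<le> card {u \<in> S. E v u}}"

definition conversion_set :: "'a set \<Rightarrow> ('a \<Rightarrow> 'a \<Rightarrow> bool) \<Rightarrow> 'a set \<Rightarrow> bool" where
  "conversion_set V E S0 \<longleftrightarrow> S0 \<subseteq> V \<and> (\<exists>t. (conv_step V E ^^ t) S0 = V)"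

end

theory Submission
  imports Defs
begin

lemma sum_swap_count:
  fixes g :: "'b \<Rightarrow> nat"
  assumes fin: "finite W" and sym: "\<forall>u v. E u v \<longrightarrow> E v u"
  shows "(\<Sum>v\<in>W. card {w\<in>W. E v w \<and> g w < g v}) = (\<Sum>v\<in>W. card {w\<in>W. E v w \<and> g v < g w})"
proof -
  have "(\<Sum>v\<in>W. card {w\<in>W. E v w \<and> g w < g v}) = card (SIGMA v:W. {w\<in>W. E v w \<and> g w < g v})"
    using fin by simp
  also have "(SIGMA v:W. {w\<in>W. E v w \<and> g w < g v}) = prod.swap ` (SIGMA v:W. {w\<in>W. E v w \<and> g v < g w})"
    using sym by (auto simp: image_iff)
  also have "card \<dots> = card (SIGMA v:W. {w\<in>W. E v w \<and> g v < g w})"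
    by (rule card_image) (auto simp: inj_on_def)
  also have "\<dots> = (\<Sum>v\<in>W. card {w\<in>W. E v w \<and> g v < g w})" using fin by simp
  finally show ?thesis .
qed

lemma conv_lemma:
  assumes sg: "simple_graph V E" and full: "(conv_step V E ^^ t) S = V"
    and v: "v \<in> V" "v \<notin> S"
  shows "2 \<le> card {w\<in>V. E v w \<and> (LEAST n. w \<in> (conv_step V E ^^ n) S) < (LEAST n. v \<in> (conv_step V E ^^ n) S)}"
proof -
  define St where "St = (\<lambda>n. (conv_step V E ^^ n) S)"
  define \<tau> where "\<tau> = (\<lambda>x. LEAST n. x \<in> St n)"
  have vt: "v \<in> St t" using full v by (simp add: St_def)
  hence in\<tau>: "v \<in> St (\<tau> v)" unfolding \<tau>_def by (rule LeastI)
  have "\<tau> v \<noteq> 0"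
  proof
    assume "\<tau> v = 0" then have "v \<in> S" using in\<tau> by (simp add: St_def)
    with v show False by simp
  qed
  then obtain m where m: "\<tau> v = Suc m" by (cases "\<tau> v") auto
  have notin: "v \<notin> St m"
  proof
    assume "v \<in> St m" hence "\<tau> v \<le> m" unfolding \<tau>_def by (rule Least_le)
    with m show False by simp
  qed
  have "v \<in> conv_step V E (St m)" using in\<tau> m by (simp add: St_def)
  hence two: "2 \<le> card {u \<in> St m. E v u}" using notin by (simp add: conv_step_def)
  have sub: "{u \<in> St m. E v u} \<subseteq> {w\<in>V. E v w \<and> \<tau> w < \<tau> v}"
  proof
    fix u assume u: "u \<in> {u \<in> St m. E v u}"
    hence "\<tau> u \<le> m" unfolding \<tau>_def by (auto intro: Least_le)
    moreover have "u \<in> V" using u sg by (auto simp: simple_graph_def)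
    ultimately show "u \<in> {w\<in>V. E v w \<and> \<tau> w < \<tau> v}" using u m by auto
  qed
  have "finite {w\<in>V. E v w \<and> \<tau> w < \<tau> v}" using sg by (auto simp: simple_graph_def)
  hence "card {u \<in> St m. E v u} \<le> card {w\<in>V. E v w \<and> \<tau> w < \<tau> v}" using sub by (rule card_mono)
  with two show ?thesis by (simp add: \<tau>_def St_def)
qed

lemma rank_exists:
  fixes \<tau> :: "'b \<Rightarrow> nat"
  assumes "finite V"
  shows "\<exists>\<rho>::'b\<Rightarrow>nat. inj_on \<rho> V \<and> (\<forall>x\<in>V. \<forall>y\<in>V. \<tau> x < \<tau> y \<longrightarrow> \<rho> x < \<rho> y)"
proof -
  obtain h where h: "bij_betw h V {0..<card V}" using ex_bij_betw_finite_nat[OF assms] by blast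
  define n where "n = card V"
  have hl: "\<And>x. x \<in> V \<Longrightarrow> h x < n" using h by (auto simp: bij_betw_def n_def)
  define \<rho> where "\<rho> = (\<lambda>x. \<tau> x * n + h x)"
  have "inj_on \<rho> V"
  proof (rule inj_onI)
    fix x y assume xy: "x \<in> V" "y \<in> V" "\<rho> x = \<rho> y"
    have m1: "\<rho> x mod n = h x" using hl[OF xy(1)] by (simp add: \<rho>_def)
    have m2: "\<rho> y mod n = h y" using hl[OF xy(2)] by (simp add: \<rho>_def)
    note m = m1 m2
    have "h x = h y" using m xy(3) by metis
    thus "x = y" using h xy by (auto simp: bij_betw_def inj_on_def)
  qed
  moreover have "\<forall>x\<in>V. \<forall>y\<in>V. \<tau> x < \<tau> y \<longrightarrow> \<rho> x < \<rho> y"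
  proof (intro ballI impI)
    fix x y assume xy: "x \<in> V" "y \<in> V" "\<tau> x < \<tau> y"
    have "\<rho> x < \<tau> x * n + n" using hl xy by (simp add: \<rho>_def)
    also have "\<dots> = Suc (\<tau> x) * n" by simp
    also have "\<dots> \<le> \<tau> y * n" using xy by (intro mult_le_mono1) simp
    also have "\<dots> \<le> \<rho> y" by (simp add: \<rho>_def)
    finally show "\<rho> x < \<rho> y" .
  qed
  ultimately show ?thesis by blast
qed

theorem lemma5p15:
  fixes VA :: "'a set" and EA :: "'a \<Rightarrow> 'a \<Rightarrow> bool" and a :: 'a
    and VH :: "'b set" and EH :: "'b \<Rightarrow> 'b \<Rightarrow> bool" and f :: "'a \<Rightarrow> 'b"
    and r :: nat and S :: "'b set"
  assumes "r > 0"
    and "cubic VA EA" and "card VA = 4 * r" and "a \<in> VA"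
    and "cubic VH EH"
    and "inj_on f (VA - {a})" and "f ` (VA - {a}) \<subseteq> VH"
    and "\<forall>u \<in> VA - {a}. \<forall>v \<in> VA - {a}. EH (f u) (f v) \<longleftrightarrow> EA u v"
    and "conversion_set VH EH S"
  shows "r \<le> card (S \<inter> f ` (VA - {a}))"
proof -
  note cA = assms(2)[unfolded cubic_def simple_graph_def]
  note cH = assms(5)[unfolded cubic_def simple_graph_def]
  have sgH: "simple_graph VH EH" using assms(5) by (simp add: cubic_def)
  have finA: "finite VA" and finH: "finite VH" using cA cH by auto
  have symA: "\<And>u v. EA u v \<Longrightarrow> EA v u" and irA: "\<And>v. \<not> EA v v"
    and inA: "\<And>u v. EA u v \<Longrightarrow> u \<in> VA \<and> v \<in> VA" and degA: "\<And>v. v \<in> VA \<Longrightarrow> card {u\<in>VA. EA v u} = 3"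
    using cA by auto
  have symH: "\<And>u v. EH u v \<Longrightarrow> EH v u" and irH: "\<And>v. \<not> EH v v"
    and inH: "\<And>u v. EH u v \<Longrightarrow> u \<in> VH \<and> v \<in> VH" and degH: "\<And>v. v \<in> VH \<Longrightarrow> card {u\<in>VH. EH v u} = 3"
    using cH by auto
  define U where "U = VA - {a}"
  define W where "W = f ` U"
  have finU: "finite U" using finA by (simp add: U_def)
  have finW: "finite W" using finU by (simp add: W_def)
  have WH: "W \<subseteq> VH" using assms(7) by (simp add: W_def U_def)
  have injU: "inj_on f U" using assms(6) by (simp add: U_def)
  have cardU: "card U = 4 * r - 1" using assms(3,4) finA by (simp add: U_def)
  have cardW: "card W = card U" using injU by (simp add: W_def card_image)
  have SH: "S \<subseteq> VH" and "\<exists>t. (conv_step VH EH ^^ t) S = VH" using assms(9) by (auto simp: conversion_set_def)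
  then obtain t where full: "(conv_step VH EH ^^ t) S = VH" by blast
  define \<tau> where "\<tau> = (\<lambda>x. LEAST n. x \<in> (conv_step VH EH ^^ n) S)"
  obtain \<rho> :: "'b \<Rightarrow> nat" where \<rho>inj: "inj_on \<rho> VH" and \<rho>mono: "\<And>x y. x \<in> VH \<Longrightarrow> y \<in> VH \<Longrightarrow> \<tau> x < \<tau> y \<Longrightarrow> \<rho> x < \<rho> y"
    using rank_exists[OF finH, of \<tau>] by blast
  have \<tau>S: "\<And>x. x \<in> S \<Longrightarrow> \<tau> x = 0" unfolding \<tau>_def by (rule Least_eq_0) simp
  have \<tau>nS: "\<And>x. x \<in> VH \<Longrightarrow> x \<notin> S \<Longrightarrow> \<tau> x \<noteq> 0"
  proof
    fix x assume x: "x \<in> VH" "x \<notin> S" "\<tau> x = 0"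
    have "x \<in> (conv_step VH EH ^^ t) S" using full x by simp
    hence "x \<in> (conv_step VH EH ^^ (\<tau> x)) S" unfolding \<tau>_def by (rule LeastI)
    with x show False by simp
  qed
  have two: "\<And>v. v \<in> VH \<Longrightarrow> v \<notin> S \<Longrightarrow> 2 \<le> card {w\<in>VH. EH v w \<and> \<rho> w < \<rho> v}"
  proof -
    fix v assume v: "v \<in> VH" "v \<notin> S"
    have "2 \<le> card {w\<in>VH. EH v w \<and> \<tau> w < \<tau> v}"
      using conv_lemma[OF sgH full v] by (simp add: \<tau>_def)
    also have "\<dots> \<le> card {w\<in>VH. EH v w \<and> \<rho> w < \<rho> v}"
      by (rule card_mono) (use finH \<rho>mono v in auto)
    finally show "2 \<le> card {w\<in>VH. EH v w \<and> \<rho> w < \<rho> v}" .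
  qed
  define P where "P = (\<lambda>v. card {w\<in>W. EH v w \<and> \<rho> v < \<rho> w})"
  define D where "D = (\<lambda>v. card {w\<in>W. EH v w \<and> \<rho> w < \<rho> v})"
  define K where "K = (\<lambda>v. card {w\<in>VH. EH v w \<and> \<not> (w \<in> W \<and> \<rho> v < \<rho> w)})"
  have DP: "card {w\<in>W. EH v w} = D v + P v" if v: "v \<in> W" for v
  proof -
    have "{w\<in>W. EH v w} = {w\<in>W. EH v w \<and> \<rho> w < \<rho> v} \<union> {w\<in>W. EH v w \<and> \<rho> v < \<rho> w}"
    proof (safe)
      fix w assume w: "w \<in> W" "EH v w" "\<not> \<rho> v < \<rho> w"
      have "w \<noteq> v" using w irH by auto
      hence "\<rho> w \<noteq> \<rho> v" using \<rho>inj w v WH by (auto simp: inj_on_def)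
      thus "\<rho> w < \<rho> v" using w by simp
    qed
    moreover have "card ({w\<in>W. EH v w \<and> \<rho> w < \<rho> v} \<union> {w\<in>W. EH v w \<and> \<rho> v < \<rho> w}) = D v + P v"
      unfolding D_def P_def by (rule card_Un_disjoint) (use finW in auto)
    ultimately show ?thesis by simp
  qed
  have KP: "K v + P v = 3" if v: "v \<in> W" for v
  proof -
    have "{w\<in>VH. EH v w} = {w\<in>VH. EH v w \<and> \<not> (w \<in> W \<and> \<rho> v < \<rho> w)} \<union> {w\<in>W. EH v w \<and> \<rho> v < \<rho> w}"
      using WH by auto
    moreover have "card ({w\<in>VH. EH v w \<and> \<not> (w \<in> W \<and> \<rho> v < \<rho> w)} \<union> {w\<in>W. EH v w \<and> \<rho> v < \<rho> w}) = K v + P v"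
      unfolding K_def P_def by (rule card_Un_disjoint) (use finW finH in auto)
    ultimately show ?thesis using degH[of v] v WH by (metis subsetD)
  qed
  have sumDP: "sum D W = sum P W"
    unfolding D_def P_def by (rule sum_swap_count[OF finW]) (use symH in blast)
  have degU: "card {x\<in>U. EA u x} + (if EA u a then 1 else 0) = 3" if u: "u \<in> U" for u
  proof -
    have "{x\<in>VA. EA u x} = {x\<in>U. EA u x} \<union> {x\<in>{a}. EA u x}" using assms(4) by (auto simp: U_def)
    moreover have "card ({x\<in>U. EA u x} \<union> {x\<in>{a}. EA u x}) = card {x\<in>U. EA u x} + card {x\<in>{a}. EA u x}"
      by (rule card_Un_disjoint) (use finU in \<open>auto simp: U_def\<close>)
    moreover have "card {x\<in>{a}. EA u x} = (if EA u a then 1 else 0)"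
    proof (cases "EA u a")
      case True hence "{x\<in>{a}. EA u x} = {a}" by auto
      thus ?thesis using True by simp
    qed simp
    moreover have "card {x\<in>VA. EA u x} = 3" using degA u by (simp add: U_def)
    ultimately show ?thesis by simp
  qed
  have cnt: "(\<Sum>u\<in>U. (if EA u a then 1 else 0::nat)) = 3"
  proof -
    have "(\<Sum>u\<in>U. (if EA u a then 1 else 0::nat)) = card {u\<in>U. EA u a}"
      using finU by (simp add: sum.If_cases Collect_conj_eq Int_commute)
    also have "{u\<in>U. EA u a} = {u\<in>VA. EA a u}" using symA irA inA by (auto simp: U_def)
    also have "card \<dots> = 3" using degA assms(4) by simp
    finally show ?thesis .
  qed
  have sumdeg: "(\<Sum>v\<in>W. card {w\<in>W. EH v w}) + 3 = 3 * card U"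
  proof -
    have "(\<Sum>v\<in>W. card {w\<in>W. EH v w}) = (\<Sum>u\<in>U. card {w\<in>W. EH (f u) w})"
      unfolding W_def by (rule sum.reindex_cong[OF injU]) auto
    also have "\<dots> = (\<Sum>u\<in>U. card {x\<in>U. EA u x})"
    proof (rule sum.cong)
      fix u assume u: "u \<in> U"
      have "{w\<in>W. EH (f u) w} = f ` {x\<in>U. EA u x}" using u assms(8) by (auto simp: W_def U_def)
      moreover have "inj_on f {x\<in>U. EA u x}" using injU by (rule inj_on_subset) auto
      ultimately show "card {w\<in>W. EH (f u) w} = card {x\<in>U. EA u x}" by (simp add: card_image)
    qed simp
    finally have "(\<Sum>v\<in>W. card {w\<in>W. EH v w}) + 3 = (\<Sum>u\<in>U. card {x\<in>U. EA u x}) + (\<Sum>u\<in>U. (if EA u a then 1 else 0::nat))"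
      using cnt by simp
    also have "\<dots> = (\<Sum>u\<in>U. 3)" unfolding sum.distrib[symmetric] by (rule sum.cong) (auto simp: degU)
    finally show ?thesis by simp
  qed
  have s1: "sum D W + sum P W + 3 = 3 * card W"
    using sumdeg DP cardW by (simp add: sum.distrib[symmetric])
  have s2: "sum K W + sum P W = 3 * card W"
    using KP by (simp add: sum.distrib[symmetric])
  have sumK: "2 * sum K W = 12 * r"
    using s1 s2 sumDP cardW cardU assms(1) by simp
  show ?thesis
  proof (cases "W - S = {}")
    case True
    hence "S \<inter> W = W" by auto
    thus ?thesis using cardW cardU assms(1) by (simp add: W_def U_def)
  next
    case False
    define M where "M = Max (\<rho> ` (W - S))"
    have "M \<in> \<rho> ` (W - S)" unfolding M_def using False finW by (intro Max_in) auto
    then obtain vm where vm: "vm \<in> W - S" "\<rho> vm = M" by blast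
    have vmmax: "\<And>w. w \<in> W - S \<Longrightarrow> \<rho> w \<le> \<rho> vm" using vm finW unfolding M_def by auto
    have Pvm: "P vm = 0"
    proof -
      have nn: "\<not> (w \<in> W \<and> EH vm w \<and> \<rho> vm < \<rho> w)" for w
      proof
        assume "w \<in> W \<and> EH vm w \<and> \<rho> vm < \<rho> w"
        hence w: "w \<in> W" "EH vm w" "\<rho> vm < \<rho> w" by auto
        show False
        proof (cases "w \<in> S")
          case True
          hence "\<tau> w < \<tau> vm" using \<tau>S \<tau>nS vm WH by auto
          moreover have "w \<in> VH" "vm \<in> VH" using vm WH w by auto
          ultimately have "\<rho> w < \<rho> vm" using \<rho>mono by blast
          with w show False by simp
        next
          case False
          with vmmax w show False by fastforce
        qed
      qed
      hence "{w\<in>W. EH vm w \<and> \<rho> vm < \<rho> w} = {}" by blast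
      thus ?thesis unfolding P_def by (metis card.empty)
    qed
    have Kvm: "K vm = 3" using KP[of vm] vm Pvm by simp
    have K2: "2 \<le> K v" if v: "v \<in> W - S" for v
    proof -
      have "2 \<le> card {w\<in>VH. EH v w \<and> \<rho> w < \<rho> v}" using two v WH by auto
      also have "\<dots> \<le> K v" unfolding K_def by (rule card_mono) (use finH in auto)
      finally show ?thesis .
    qed
    have "sum K (W - S) \<le> sum K W" using finW by (intro sum_mono2) auto
    moreover have "sum K (W - S) = K vm + sum K (W - S - {vm})"
      using vm finW by (intro sum.remove) auto
    moreover have "sum K (W - S - {vm}) \<ge> 2 * card (W - S - {vm})"
      using K2 sum_mono[of "W - S - {vm}" "\<lambda>_. 2" K] by auto
    moreover have "card (W - S - {vm}) + 1 = card (W - S)" using vm finW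
      by (metis card_Diff1_less_iff card_Diff_singleton_if finite_Diff Suc_eq_plus1 Suc_pred' gr0I less_zeroE)
    ultimately have "2 * card (W - S) + 1 \<le> 6 * r" using sumK Kvm by linarith
    moreover have "card (W - S) + card (S \<inter> W) = card W"
    proof -
      have "card ((W - S) \<union> (S \<inter> W)) = card (W - S) + card (S \<inter> W)"
        by (rule card_Un_disjoint) (use finW in auto)
      moreover have "(W - S) \<union> (S \<inter> W) = W" by auto
      ultimately show ?thesis by simp
    qed
    ultimately show ?thesis using cardW cardU assms(1) by (simp add: W_def U_def)
  qed
qed

end
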